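(* Let $d$ be a metric on $\mathbb R^n$ induced by a norm, $\delta>0$. Let $\{\mathcal D^n(\delta);\tilde w_1,\dots,\tilde w_N;p_1,\dots,p_N\}$ be a DIFS in which each $\tilde w_i$ is the $\delta$-roundoff of a contraction $w_i$ on $(\mathbb R^n,d)$ with contractivity factor $\lambda_i$, and let $\lambda_{max}=\max_i\lambda_i$. Let $\{\mathbb R^n;w_1,\dots,w_N;q_1,\dots,q_N\}$ be an IFS with constant probabilities $q_i\in(0,1]$, $\sum_iq_i=1$. Let $\tilde x_0\in\mathcal D^n(\delta)$, and let $X=\{X_k\}$ with $X_0=\tilde x_0$ and $\tilde X=\{\tilde X_k\}$ with $\tilde X_0=\tilde x_0$ be the Markov chains generated by the IFS and the DIFS respectively (at each step a map index is chosen according to $(q_i)$, resp. $(p_i(\tilde X_{k-1}))$, and the chosen map is applied). Then for any orbit $\{x_k=w_{i_k}(x_{k-1})\}$ of $X$ (respectively any orbit $\{\tilde x_k=\tilde w_{i_k}(\tilde x_{k-1})\}$ of $\tilde X$) there exists an orbit $\{\tilde x_k=\tilde w_{i_k}(\tilde x_{k-1})\}$ of $\tilde X$ (respectively an orbit $\{x_k=w_{i_k}(x_{k-1})\}$ of $X$), with the same index sequence $(i_k)$ and $x_0=\tilde x_0$, such that for all $k\in\mathbb N$, $$d(x_k,\tilde x_k)\le\theta(1-\lambda_{max})^{-1}.$$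
   Context: For $m\in\mathbb Z^n$, $C_\delta(m)=\prod_{j=1}^n[(m_j-\tfrac12)\delta,(m_j+\tfrac12)\delta)$; $\mathcal D^n(\delta)=\{\delta m:m\in\mathbb Z^n\}\subset\mathbb R^n$. The $\delta$-roundoff of $x\in\mathbb R^n$ is $\tilde x=\delta m$ where $x\in C_\delta(m)$; the $\delta$-roundoff of $w$ is $\tilde w(\tilde x)=\widetilde{w(\tilde x)}$ on $\mathcal D^n(\delta)$. $\theta:=\tfrac12\operatorname{diam}_d(C_\delta(0))$. A DIFS $\{S;\tilde w_1,\dots,\tilde w_N;p_1,\dots,p_N\}$ consists of $S\subset\mathcal D^n(\delta)$, maps $\tilde w_i:S\to S$ and functions $p_i:S\to(0,1]$ with $\sum_ip_i(\tilde x)=1$ for every $\tilde x$. *)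

theory Defs
  imports "HOL-Analysis.Analysis"
begin

text \<open>A norm on R^n (the metric d is d x y = nrm (x - y)).\<close>
definition is_norm :: "(real^'n \<Rightarrow> real) \<Rightarrow> bool" where
  "is_norm nrm \<longleftrightarrow>
     (\<forall>x. nrm x = 0 \<longleftrightarrow> x = 0) \<and>
     (\<forall>x y. nrm (x + y) \<le> nrm x + nrm y) \<and>
     (\<forall>c x. nrm (c *\<^sub>R x) = \<bar>c\<bar> * nrm x)"

definition cell :: "real \<Rightarrow> (int^'n) \<Rightarrow> (real^'n) set" where
  "cell \<delta> m = {x. \<forall>j. (real_of_int (m$j) - 1/2) * \<delta> \<le> x$j \<and> x$j < (real_of_int (m$j) + 1/2) * \<delta>}"

definition grid :: "real \<Rightarrow> (real^'n) set" where
  "grid \<delta> = {x. \<exists>m::int^'n. x = (\<chi> j. \<delta> * real_of_int (m$j))}"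

text \<open>delta-roundoff: the grid point delta*m with x in C_delta(m).\<close>
definition roundoff :: "real \<Rightarrow> real^'n \<Rightarrow> real^'n" where
  "roundoff \<delta> x = (\<chi> j. \<delta> * real_of_int \<lfloor>x$j / \<delta> + 1/2\<rfloor>)"

definition theta :: "(real^'n \<Rightarrow> real) \<Rightarrow> real \<Rightarrow> real" where
  "theta nrm \<delta> = (1/2) * (SUP x\<in>cell \<delta> (0::int^'n). SUP y\<in>cell \<delta> 0. nrm (x - y))"

end

theory Submission
  imports Defs
begin


lemma nrm_basic:
  assumes "is_norm nrm"
  shows "nrm 0 = 0" "nrm (- x) = nrm x" "nrm x \<ge> 0"
    "nrm (sum f A) \<le> (\<Sum>a\<in>A. nrm (f a))"
proof -
  have z: "\<forall>x. nrm x = 0 \<longleftrightarrow> x = 0" and t: "\<forall>x y. nrm (x + y) \<le> nrm x + nrm y"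
    and h: "\<forall>c x. nrm (c *\<^sub>R x) = \<bar>c\<bar> * nrm x" using assms unfolding is_norm_def by auto
  show "nrm 0 = 0" using z by simp
  show m: "nrm (- x) = nrm x" using h[rule_format, of "-1" x] by simp
  have "nrm 0 \<le> nrm x + nrm (- x)" using t[rule_format, of x "-x"] by simp
  moreover have "nrm 0 = 0" using z by simp
  ultimately show "nrm x \<ge> 0" using m by simp
  show "nrm (sum f A) \<le> (\<Sum>a\<in>A. nrm (f a))"
  proof (induction A rule: infinite_finite_induct)
    case (infinite A) then show ?case using z by (metis order_refl sum.infinite)
  next
    case empty then show ?case using z by (metis order_refl sum.empty)
  next
    case (insert a A)
    then show ?case using t[rule_format, of "f a" "sum f A"] by simp
  qed
qed

lemma nrm_bound:
  fixes nrm :: "real^'n \<Rightarrow> real"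
  assumes "is_norm nrm" "\<forall>j. \<bar>x$j\<bar> \<le> c"
  shows "nrm x \<le> (\<Sum>b\<in>Basis. c * nrm b)"
proof -
  have h: "\<forall>c x. nrm (c *\<^sub>R x) = \<bar>c\<bar> * nrm x" using assms unfolding is_norm_def by auto
  have "nrm x = nrm (\<Sum>b\<in>Basis. (x \<bullet> b) *\<^sub>R b)" by (simp add: euclidean_representation)
  also have "\<dots> \<le> (\<Sum>b\<in>Basis. nrm ((x \<bullet> b) *\<^sub>R b))" using nrm_basic(4)[OF assms(1)] by blast
  also have "\<dots> \<le> (\<Sum>b\<in>Basis. c * nrm b)"
  proof (rule sum_mono)
    fix b :: "real^'n" assume "b \<in> Basis"
    then obtain i where b: "b = axis i 1" unfolding Basis_vec_def by auto
    have "\<bar>x \<bullet> b\<bar> \<le> c" using assms(2) b by (simp add: inner_axis)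
    then show "nrm ((x \<bullet> b) *\<^sub>R b) \<le> c * nrm b"
      using h nrm_basic(3)[OF assms(1), of b] by (simp add: mult_right_mono)
  qed
  finally show ?thesis .
qed

lemma cell0_iff: "y \<in> cell \<delta> 0 \<longleftrightarrow> (\<forall>j. - \<delta>/2 \<le> y$j \<and> y$j < \<delta>/2)"
  unfolding cell_def by auto

lemma round_grid: "roundoff \<delta> x \<in> grid \<delta>"
  unfolding roundoff_def grid_def mem_Collect_eq by (rule exI[of _ "\<chi> j. \<lfloor>x$j / \<delta> + 1/2\<rfloor>"]) simp

lemma round_err:
  assumes "\<delta> > 0" shows "x - roundoff \<delta> x \<in> cell \<delta> 0"
  unfolding cell0_iff
proof
  fix j
  let ?m = "\<lfloor>x$j / \<delta> + 1/2\<rfloor>"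
  have a: "real_of_int ?m \<le> x$j/\<delta> + 1/2" "x$j/\<delta> + 1/2 < real_of_int ?m + 1"
    by linarith+
  have e: "\<delta> * (x$j/\<delta> + 1/2) = x$j + \<delta>/2" using assms by (simp add: field_simps)
  have "\<delta> * real_of_int ?m \<le> x$j + \<delta>/2" using mult_left_mono[OF a(1), of \<delta>] assms e
    by simp
  moreover have "x$j + \<delta>/2 < \<delta> * real_of_int ?m + \<delta>" using mult_strict_left_mono[OF a(2) assms] e
    by (simp add: distrib_left)
  ultimately show "- \<delta>/2 \<le> (x - roundoff \<delta> x)$j \<and> (x - roundoff \<delta> x)$j < \<delta>/2"
    unfolding roundoff_def by simp
qed

lemma theta_bound:
  fixes nrm :: "real^'n \<Rightarrow> real"
  assumes nm: "is_norm nrm" and d: "\<delta> > 0" and y: "y \<in> cell \<delta> 0"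
  shows "nrm y \<le> theta nrm \<delta>"
proof -
  let ?C = "cell \<delta> (0::int^'n)"
  define B where "B = (\<Sum>b\<in>Basis. \<delta> * nrm (b::real^'n))"
  have bd: "nrm (a - b) \<le> B" if "a \<in> ?C" "b \<in> ?C" for a b
    unfolding B_def
  proof (rule nrm_bound[OF nm])
    show "\<forall>j. \<bar>(a - b)$j\<bar> \<le> \<delta>"
    proof
      fix j
      have "- \<delta>/2 \<le> a$j" "a$j < \<delta>/2" "- \<delta>/2 \<le> b$j" "b$j < \<delta>/2"
        using that unfolding cell0_iff by auto
      then show "\<bar>(a - b)$j\<bar> \<le> \<delta>" by simp
    qed
  qed
  have "0 \<in> ?C" using d unfolding cell0_iff by simp
  then have ne: "?C \<noteq> {}" by blast
  have sup: "nrm (a - b) \<le> (SUP x\<in>?C. SUP y\<in>?C. nrm (x - y))" if "a \<in> ?C" "b \<in> ?C" for a b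
  proof -
    have bi: "bdd_above ((\<lambda>y. nrm (x - y)) ` ?C)" if "x \<in> ?C" for x
      using bd that by (auto intro!: bdd_aboveI)
    have "nrm (a - b) \<le> (SUP y\<in>?C. nrm (a - y))" by (rule cSUP_upper[OF that(2) bi[OF that(1)]])
    also have "\<dots> \<le> (SUP x\<in>?C. SUP y\<in>?C. nrm (x - y))"
    proof (rule cSUP_upper[OF that(1)])
      show "bdd_above ((\<lambda>x. SUP y\<in>?C. nrm (x - y)) ` ?C)"
        using bd ne by (auto intro!: bdd_aboveI cSUP_least)
    qed
    finally show ?thesis .
  qed
  have h: "\<forall>c x. nrm (c *\<^sub>R x) = \<bar>c\<bar> * nrm x" using nm unfolding is_norm_def by auto
  have "nrm y \<le> theta nrm \<delta>"
  proof (rule field_le_mult_one_interval)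
    fix t :: real assume t: "0 < t" "t < 1"
    have c: "\<forall>j. - \<delta>/2 \<le> y$j \<and> y$j < \<delta>/2" using y unfolding cell0_iff .
    have in1: "t *\<^sub>R y \<in> ?C" "- (t *\<^sub>R y) \<in> ?C" unfolding cell0_iff
    proof (safe)
      fix j
      have "- \<delta>/2 \<le> y$j" "y$j < \<delta>/2" using c by auto
      then have "\<bar>y$j\<bar> \<le> \<delta>/2" by simp
      then have "t * \<bar>y$j\<bar> \<le> t * (\<delta>/2)" using t by (intro mult_left_mono) auto
      moreover have "t * (\<delta>/2) < \<delta>/2" using t d by simp
      ultimately have "t * \<bar>y$j\<bar> < \<delta>/2" by linarith
      then have "\<bar>t * y$j\<bar> < \<delta>/2" using t by (simp add: abs_mult)
      then show "- \<delta>/2 \<le> (t *\<^sub>R y)$j" "(t *\<^sub>R y)$j < \<delta>/2" "- \<delta>/2 \<le> (- (t *\<^sub>R y))$j"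
        "(- (t *\<^sub>R y))$j < \<delta>/2" by auto
    qed
    have "t *\<^sub>R y - - (t *\<^sub>R y) = (2*t) *\<^sub>R y" by (metis diff_minus_eq_add scaleR_2 scaleR_scaleR mult.commute)
    then have "2 * t * nrm y \<le> (SUP x\<in>?C. SUP y\<in>?C. nrm (x - y))"
      using sup[OF in1] h t by simp
    then show "t * nrm y \<le> theta nrm \<delta>" unfolding theta_def by simp
  qed
  then show ?thesis .
qed

lemma orbit_bound:
  fixes nrm :: "real^'n \<Rightarrow> real" and x xt :: "nat \<Rightarrow> real^'n" and N :: nat
    and lam :: "nat \<Rightarrow> real" and w wt :: "nat \<Rightarrow> real^'n \<Rightarrow> real^'n" and idx :: "nat \<Rightarrow> nat"
  assumes norm: "is_norm nrm" and delta: "\<delta> > 0" and N: "N \<ge> 1"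
    and contr: "\<And>i. i \<in> {1..N} \<Longrightarrow> 0 \<le> lam i \<and> lam i < 1 \<and>
                   (\<forall>x y. nrm (w i x - w i y) \<le> lam i * nrm (x - y))"
    and wt: "\<And>i xt. i \<in> {1..N} \<Longrightarrow> xt \<in> grid \<delta> \<Longrightarrow> wt i xt = roundoff \<delta> (w i xt)"
    and x0: "x0 \<in> grid \<delta>"
    and idx: "\<And>k. idx (Suc k) \<in> {1..N}"
    and s0: "x 0 = x0" "xt 0 = x0"
    and sx: "\<And>k. x (Suc k) = w (idx (Suc k)) (x k)"
    and sxt: "\<And>k. xt (Suc k) = wt (idx (Suc k)) (xt k)"
  shows "xt k \<in> grid \<delta> \<and> nrm (x k - xt k) \<le> theta nrm \<delta> / (1 - Max (lam ` {1..N}))"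
proof -
  define L where "L = Max (lam ` {1..N})"
  have fin: "finite (lam ` {1..N})" "lam ` {1..N} \<noteq> {}" using N by auto
  have Lge: "lam i \<le> L" if "i \<in> {1..N}" for i unfolding L_def using fin that by auto
  have "L \<in> lam ` {1..N}" unfolding L_def using fin by (rule Max_in)
  then have L1: "L < 1" "0 \<le> L" using contr by auto
  have "(0::real^'n) \<in> cell \<delta> 0" using delta unfolding cell0_iff by simp
  then have th0: "0 \<le> theta nrm \<delta>" using theta_bound[OF norm delta] nrm_basic(1)[OF norm] by fastforce
  show ?thesis unfolding L_def[symmetric]
  proof (induction k)
    case 0 then show ?case using s0 x0 nrm_basic(1)[OF norm] th0 L1 by simp
  next
    case (Suc k)
    let ?i = "idx (Suc k)"
    have i: "?i \<in> {1..N}" by (rule idx)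
    have g: "xt k \<in> grid \<delta>" and ek: "nrm (x k - xt k) \<le> theta nrm \<delta> / (1 - L)" using Suc by auto
    have xts: "xt (Suc k) = roundoff \<delta> (w ?i (xt k))" using sxt wt[OF i g] by simp
    have tri: "\<forall>x y. nrm (x + y) \<le> nrm x + nrm y" using norm unfolding is_norm_def by auto
    have "x (Suc k) - xt (Suc k) = (w ?i (x k) - w ?i (xt k)) + (w ?i (xt k) - roundoff \<delta> (w ?i (xt k)))"
      using sx xts by simp
    then have "nrm (x (Suc k) - xt (Suc k)) \<le> nrm (w ?i (x k) - w ?i (xt k)) + nrm (w ?i (xt k) - roundoff \<delta> (w ?i (xt k)))"
      using tri by metis
    also have "\<dots> \<le> lam ?i * nrm (x k - xt k) + theta nrm \<delta>"
      using contr[OF i] theta_bound[OF norm delta round_err[OF delta]] by (meson add_mono)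
    also have "\<dots> \<le> L * (theta nrm \<delta> / (1 - L)) + theta nrm \<delta>"
    proof -
      have "lam ?i * nrm (x k - xt k) \<le> L * nrm (x k - xt k)"
        using Lge[OF i] nrm_basic(3)[OF norm] by (simp add: mult_right_mono)
      also have "\<dots> \<le> L * (theta nrm \<delta> / (1 - L))" using mult_left_mono[OF ek L1(2)] .
      finally show ?thesis by simp
    qed
    also have "\<dots> = theta nrm \<delta> / (1 - L)" using L1 by (simp add: field_simps)
    finally show ?case using xts round_grid by simp
  qed
qed


theorem lemma6:
  fixes nrm :: "real^'n \<Rightarrow> real"
    and \<delta> :: real and N :: nat
    and w wt :: "nat \<Rightarrow> real^'n \<Rightarrow> real^'n"
    and lam :: "nat \<Rightarrow> real"
    and p :: "nat \<Rightarrow> real^'n \<Rightarrow> real"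
    and q :: "nat \<Rightarrow> real"
    and x0 :: "real^'n"
  assumes norm: "is_norm nrm"
    and delta: "\<delta> > 0"
    and N: "N \<ge> 1"
    and contr: "\<And>i. i \<in> {1..N} \<Longrightarrow> 0 \<le> lam i \<and> lam i < 1 \<and>
                   (\<forall>x y. nrm (w i x - w i y) \<le> lam i * nrm (x - y))"
    and wt: "\<And>i xt. i \<in> {1..N} \<Longrightarrow> xt \<in> grid \<delta> \<Longrightarrow> wt i xt = roundoff \<delta> (w i xt)"
    and p_pos: "\<And>i xt. i \<in> {1..N} \<Longrightarrow> xt \<in> grid \<delta> \<Longrightarrow> 0 < p i xt \<and> p i xt \<le> 1"
    and p_sum: "\<And>xt. xt \<in> grid \<delta> \<Longrightarrow> (\<Sum>i=1..N. p i xt) = 1"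
    and q_pos: "\<And>i. i \<in> {1..N} \<Longrightarrow> 0 < q i \<and> q i \<le> 1"
    and q_sum: "(\<Sum>i=1..N. q i) = 1"
    and x0: "x0 \<in> grid \<delta>"
  shows
    "(\<forall>(x :: nat \<Rightarrow> real^'n) (idx :: nat \<Rightarrow> nat).
        x 0 = x0 \<and> (\<forall>k. idx (Suc k) \<in> {1..N} \<and> 0 < q (idx (Suc k)) \<and>
                         x (Suc k) = w (idx (Suc k)) (x k))
        \<longrightarrow> (\<exists>xt :: nat \<Rightarrow> real^'n. xt 0 = x0 \<and>
               (\<forall>k. 0 < p (idx (Suc k)) (xt k) \<and> xt (Suc k) = wt (idx (Suc k)) (xt k)) \<and>
               (\<forall>k. nrm (x k - xt k) \<le> theta nrm \<delta> / (1 - Max (lam ` {1..N})))))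
   \<and> (\<forall>(xt :: nat \<Rightarrow> real^'n) (idx :: nat \<Rightarrow> nat).
        xt 0 = x0 \<and> (\<forall>k. idx (Suc k) \<in> {1..N} \<and> 0 < p (idx (Suc k)) (xt k) \<and>
                          xt (Suc k) = wt (idx (Suc k)) (xt k))
        \<longrightarrow> (\<exists>x :: nat \<Rightarrow> real^'n. x 0 = x0 \<and>
               (\<forall>k. 0 < q (idx (Suc k)) \<and> x (Suc k) = w (idx (Suc k)) (x k)) \<and>
               (\<forall>k. nrm (x k - xt k) \<le> theta nrm \<delta> / (1 - Max (lam ` {1..N})))))"
proof (intro conjI allI impI)
  fix x :: "nat \<Rightarrow> real^'n" and idx :: "nat \<Rightarrow> nat"
  assume h: "x 0 = x0 \<and> (\<forall>k. idx (Suc k) \<in> {1..N} \<and> 0 < q (idx (Suc k)) \<and>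
                         x (Suc k) = w (idx (Suc k)) (x k))"
  define xt :: "nat \<Rightarrow> real^'n" where "xt = rec_nat x0 (\<lambda>k v. wt (idx (Suc k)) v)"
  have xt0: "xt 0 = x0" and xtS: "\<And>k. xt (Suc k) = wt (idx (Suc k)) (xt k)" by (simp_all add: xt_def)
  have B: "xt k \<in> grid \<delta> \<and> nrm (x k - xt k) \<le> theta nrm \<delta> / (1 - Max (lam ` {1..N}))" for k
    by (rule orbit_bound[OF norm delta N contr wt x0, where idx=idx and x=x and xt=xt]) (use h xt0 xtS in auto)
  show "\<exists>xt :: nat \<Rightarrow> real^'n. xt 0 = x0 \<and>
               (\<forall>k. 0 < p (idx (Suc k)) (xt k) \<and> xt (Suc k) = wt (idx (Suc k)) (xt k)) \<and>
               (\<forall>k. nrm (x k - xt k) \<le> theta nrm \<delta> / (1 - Max (lam ` {1..N})))"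
    by (rule exI[of _ xt]) (use B h xt0 xtS p_pos in auto)
next
  fix xt :: "nat \<Rightarrow> real^'n" and idx :: "nat \<Rightarrow> nat"
  assume h: "xt 0 = x0 \<and> (\<forall>k. idx (Suc k) \<in> {1..N} \<and> 0 < p (idx (Suc k)) (xt k) \<and>
                          xt (Suc k) = wt (idx (Suc k)) (xt k))"
  define x :: "nat \<Rightarrow> real^'n" where "x = rec_nat x0 (\<lambda>k v. w (idx (Suc k)) v)"
  have x0': "x 0 = x0" and xS: "\<And>k. x (Suc k) = w (idx (Suc k)) (x k)" by (simp_all add: x_def)
  have B: "xt k \<in> grid \<delta> \<and> nrm (x k - xt k) \<le> theta nrm \<delta> / (1 - Max (lam ` {1..N}))" for k
    by (rule orbit_bound[OF norm delta N contr wt x0, where idx=idx and x=x and xt=xt]) (use h x0' xS in auto)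
  show "\<exists>x :: nat \<Rightarrow> real^'n. x 0 = x0 \<and>
               (\<forall>k. 0 < q (idx (Suc k)) \<and> x (Suc k) = w (idx (Suc k)) (x k)) \<and>
               (\<forall>k. nrm (x k - xt k) \<le> theta nrm \<delta> / (1 - Max (lam ` {1..N})))"
    by (rule exI[of _ x]) (use B h x0' xS q_pos in auto)
qed

end
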